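(* Let $\mathcal{V}$ be a finite set of Boolean variables, let $B^{inv}(\mathcal{V}\cup\mathbf{X}\mathcal{V})$ be a pure Boolean expression over the atoms $p$ and $\mathbf{X}p$ ($p\in\mathcal{V}$), and let $B^{fair}(\mathcal{V})$ be a pure Boolean expression over $\mathcal{V}$. For $\phi^c=\mathbf{G}\,B^{inv}(\mathcal{V}\cup\mathbf{X}\mathcal{V})\wedge\mathbf{F}\mathbf{G}\,\neg B^{fair}(\mathcal{V})$ we have $\dim(L(\phi^c))=\dim\big(L(\mathbf{G}(B^{inv}\wedge\neg B^{fair}))\big)$.
   Context: Formulae are interpreted over $\omega$-words $w=w_1w_2\dots$ over $\Sigma=2^{\mathcal{V}}$; $L(\phi)$ is the set of $\omega$-words satisfying $\phi$. $w\models p$ iff $p\in w_1$, $w\models\mathbf{X}p$ iff $p\in w_2$; $w\models\mathbf{G}\psi$ iff every suffix $w^j=w_jw_{j+1}\dots$ satisfies $\psi$, and $w\models\mathbf{F}\psi$ iff some suffix $w^j$ satisfies $\psi$. Let $r=|\Sigma|$. For $L\subseteq\Sigma^\omega$, the $\alpha$-dimensional Hausdorff outer measure is $m_\alpha(L)=\lim_{n\to\infty}\inf_{V\in\mathcal{L}_n}\sum_{v\in V}r^{-\alpha|v|}$, where $\mathcal{L}_n$ is the collection of sets $V\subseteq\Sigma^*$ of words of length at least $n$ such that every word of $L$ has a prefix in $V$; the Hausdorff dimension $\dim(L)$ is the unique $\bar\alpha$ with $m_\alpha(L)=\infty$ for $\alpha<\bar\alpha$ and $m_\alpha(L)=0$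 for $\alpha>\bar\alpha$. *)

theory Defs
  imports "HOL-Analysis.Analysis"
begin

text \<open>Variables: a finite type 'v (the finite set V). Alphabet Sigma = 2^V = 'v set.
  omega-words are functions nat => 'v set (index 0 = first letter).\<close>

type_synonym 'v oword = "nat \<Rightarrow> 'v set"

datatype 'a bexp = BTrue | BFalse | BAtom 'a | BNot "'a bexp"
  | BAnd "'a bexp" "'a bexp" | BOr "'a bexp" "'a bexp"

datatype 'v xatom = Cur 'v | Nxt 'v

datatype 'v ltl = LProp 'v | LTrue | LFalse | LNot "'v ltl" | LAnd "'v ltl" "'v ltl"
  | LOr "'v ltl" "'v ltl" | LX "'v ltl" | LG "'v ltl" | LF "'v ltl"

definition suffix_w :: "'v oword \<Rightarrow> nat \<Rightarrow> 'v oword" where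
  "suffix_w w j = (\<lambda>i. w (i + j))"

fun sat :: "'v oword \<Rightarrow> 'v ltl \<Rightarrow> bool" where
  "sat w (LProp p) = (p \<in> w 0)"
| "sat w LTrue = True"
| "sat w LFalse = False"
| "sat w (LNot \<phi>) = (\<not> sat w \<phi>)"
| "sat w (LAnd \<phi> \<psi>) = (sat w \<phi> \<and> sat w \<psi>)"
| "sat w (LOr \<phi> \<psi>) = (sat w \<phi> \<or> sat w \<psi>)"
| "sat w (LX \<phi>) = sat (suffix_w w 1) \<phi>"
| "sat w (LG \<phi>) = (\<forall>j. sat (suffix_w w j) \<phi>)"
| "sat w (LF \<phi>) = (\<exists>j. sat (suffix_w w j) \<phi>)"

definition lang :: "'v ltl \<Rightarrow> 'v oword set" where
  "lang \<phi> = {w. sat w \<phi>}"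

fun bexp_to_ltl :: "('a \<Rightarrow> 'v ltl) \<Rightarrow> 'a bexp \<Rightarrow> 'v ltl" where
  "bexp_to_ltl f BTrue = LTrue"
| "bexp_to_ltl f BFalse = LFalse"
| "bexp_to_ltl f (BAtom a) = f a"
| "bexp_to_ltl f (BNot b) = LNot (bexp_to_ltl f b)"
| "bexp_to_ltl f (BAnd b c) = LAnd (bexp_to_ltl f b) (bexp_to_ltl f c)"
| "bexp_to_ltl f (BOr b c) = LOr (bexp_to_ltl f b) (bexp_to_ltl f c)"

fun xatom_ltl :: "'v xatom \<Rightarrow> 'v ltl" where
  "xatom_ltl (Cur p) = LProp p"
| "xatom_ltl (Nxt p) = LX (LProp p)"

definition inv_ltl :: "'v xatom bexp \<Rightarrow> 'v ltl" where
  "inv_ltl b = bexp_to_ltl xatom_ltl b"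

definition fair_ltl :: "'v bexp \<Rightarrow> 'v ltl" where
  "fair_ltl b = bexp_to_ltl LProp b"

definition alph_size :: "'v::finite itself \<Rightarrow> real" where
  "alph_size _ = 2 ^ CARD('v)"

definition is_prefix :: "'v set list \<Rightarrow> 'v oword \<Rightarrow> bool" where
  "is_prefix u w \<longleftrightarrow> (\<forall>i < length u. u ! i = w i)"

definition covers :: "'v oword set \<Rightarrow> nat \<Rightarrow> 'v set list set set" where
  "covers L n = {V. (\<forall>v\<in>V. length v \<ge> n) \<and> (\<forall>w\<in>L. \<exists>v\<in>V. is_prefix v w)}"

text \<open>Sum of nonnegative terms over an arbitrary set: supremum of finite partial sums.\<close>
definition cover_weight :: "real \<Rightarrow> ('v::finite) set list set \<Rightarrow> ennreal" where
  "cover_weight \<alpha> V = (SUP F\<in>{F. finite F \<and> F \<subseteq> V}.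
      \<Sum>v\<in>F. ennreal (alph_size TYPE('v) powr (- \<alpha> * real (length v))))"

definition hmeasure :: "real \<Rightarrow> ('v::finite) oword set \<Rightarrow> ennreal" where
  "hmeasure \<alpha> L = lim (\<lambda>n. INF V\<in>covers L n. cover_weight \<alpha> V)"

definition hdim :: "('v::finite) oword set \<Rightarrow> real" where
  "hdim L = (THE d. (\<forall>\<alpha><d. hmeasure \<alpha> L = \<infinity>) \<and> (\<forall>\<alpha>>d. hmeasure \<alpha> L = 0))"

end

theory Submission
  imports Defs
begin

abbreviation rr :: "'v::finite itself \<Rightarrow> real" where "rr t \<equiv> alph_size t"

lemma r_ge2: "alph_size TYPE('v::finite) \<ge> 2"
proof -
  have "CARD('v) \<ge> 1" by (simp add: Suc_leI)
  then have "(2::real) ^ 1 \<le> 2 ^ CARD('v)" by (intro power_increasing) auto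
  then show ?thesis by (simp add: alph_size_def)
qed

definition Mn :: "real \<Rightarrow> ('v::finite) oword set \<Rightarrow> nat \<Rightarrow> ennreal" where
  "Mn \<alpha> L = (\<lambda>n. INF V\<in>covers L n. cover_weight \<alpha> V)"

lemma hm_SUP: "hmeasure \<alpha> L = (SUP n. Mn \<alpha> L n)"
proof -
  have "incseq (Mn \<alpha> L)" unfolding incseq_def Mn_def
    by (intro allI impI INF_superset_mono) (auto simp: covers_def)
  then have "lim (Mn \<alpha> L) = (SUP n. Mn \<alpha> L n)" by (intro limI LIMSEQ_SUP)
  then show ?thesis unfolding hmeasure_def Mn_def .
qed

lemma cw_le:
  assumes "\<And>F. finite F \<Longrightarrow> F \<subseteq> V \<Longrightarrow>
     (\<Sum>v\<in>F. ennreal (alph_size TYPE('v) powr (- \<alpha> * real (length v)))) \<le> c"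
  shows "cover_weight \<alpha> (V :: ('v::finite) set list set) \<le> c"
  unfolding cover_weight_def using assms by (intro SUP_least) auto

lemma cw_ge:
  assumes "finite F" "F \<subseteq> V"
  shows "(\<Sum>v\<in>F. ennreal (alph_size TYPE('v) powr (- \<alpha> * real (length v)))) \<le> cover_weight \<alpha> (V :: ('v::finite) set list set)"
  unfolding cover_weight_def using assms by (intro SUP_upper) auto

lemma null_iff: "hmeasure \<alpha> L = 0 \<longleftrightarrow> (\<forall>n. \<forall>e>0. \<exists>V\<in>covers L n. cover_weight \<alpha> V < ennreal e)"
proof
  assume h: "hmeasure \<alpha> L = 0"
  show "\<forall>n. \<forall>e>0. \<exists>V\<in>covers L n. cover_weight \<alpha> V < ennreal e"
  proof (intro allI impI)
    fix n and e :: real assume "e > 0"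
    have "Mn \<alpha> L n \<le> hmeasure \<alpha> L" unfolding hm_SUP by (rule SUP_upper) auto
    with h have "Mn \<alpha> L n < ennreal e" using \<open>e>0\<close> by simp
    then show "\<exists>V\<in>covers L n. cover_weight \<alpha> V < ennreal e" unfolding Mn_def by (simp add: INF_less_iff)
  qed
next
  assume h: "\<forall>n. \<forall>e>0. \<exists>V\<in>covers L n. cover_weight \<alpha> V < ennreal e"
  have "Mn \<alpha> L n \<le> 0" for n
  proof (rule ennreal_le_epsilon)
    fix e :: real assume "0 < e"
    then obtain V where "V \<in> covers L n" "cover_weight \<alpha> V < ennreal e" using h by blast
    then have "Mn \<alpha> L n \<le> cover_weight \<alpha> V" unfolding Mn_def by (intro INF_lower)
    with \<open>cover_weight \<alpha> V < ennreal e\<close> show "Mn \<alpha> L n \<le> 0 + ennreal e" by simp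
  qed
  then show "hmeasure \<alpha> L = 0" unfolding hm_SUP by (simp add: SUP_least antisym)
qed

lemma hm_mono: "L \<subseteq> L' \<Longrightarrow> hmeasure \<alpha> L \<le> hmeasure \<alpha> L'"
  unfolding hm_SUP Mn_def
  by (intro SUP_mono' INF_superset_mono) (auto simp: covers_def)

lemma Mn_mono: "m \<le> n \<Longrightarrow> Mn \<alpha> L m \<le> Mn \<alpha> L n"
  unfolding Mn_def by (intro INF_superset_mono) (auto simp: covers_def)

lemma cw_scale:
  assumes "\<forall>v\<in>V. length v \<ge> N" "\<alpha> < \<beta>"
  shows "cover_weight \<beta> (V :: ('v::finite) set list set)
     \<le> ennreal (alph_size TYPE('v) powr (-(\<beta>-\<alpha>) * real N)) * cover_weight \<alpha> V"
proof (rule cw_le)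
  let ?r = "alph_size TYPE('v)"
  let ?c = "?r powr (-(\<beta>-\<alpha>) * real N)"
  have r: "?r \<ge> 2" by (rule r_ge2)
  fix F assume F: "finite F" "F \<subseteq> V"
  have pt: "ennreal (?r powr (- \<beta> * real (length v))) \<le> ennreal ?c * ennreal (?r powr (- \<alpha> * real (length v)))"
    if "v \<in> F" for v
  proof -
    have "length v \<ge> N" using that F assms(1) by auto
    have "?r powr (- \<beta> * real (length v)) = ?r powr (-(\<beta>-\<alpha>) * real (length v)) * ?r powr (- \<alpha> * real (length v))"
      by (simp add: powr_add[symmetric] algebra_simps)
    also have "\<dots> \<le> ?c * ?r powr (- \<alpha> * real (length v))"
      using r assms(2) \<open>length v \<ge> N\<close> by (intro mult_right_mono powr_mono) auto
    finally show ?thesis by (simp add: ennreal_mult[symmetric])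
  qed
  have "(\<Sum>v\<in>F. ennreal (?r powr (- \<beta> * real (length v)))) \<le> (\<Sum>v\<in>F. ennreal ?c * ennreal (?r powr (- \<alpha> * real (length v))))"
    by (rule sum_mono) (rule pt)
  also have "\<dots> = ennreal ?c * (\<Sum>v\<in>F. ennreal (?r powr (- \<alpha> * real (length v))))"
    by (rule sum_distrib_left[symmetric])
  also have "\<dots> \<le> ennreal ?c * cover_weight \<alpha> V"
    by (intro mult_left_mono cw_ge F) auto
  finally show "(\<Sum>v\<in>F. ennreal (?r powr (- \<beta> * real (length v)))) \<le> ennreal ?c * cover_weight \<alpha> V" .
qed

lemma hm_scale:
  assumes fin: "hmeasure \<alpha> (L :: ('v::finite) oword set) < \<infinity>" and ab: "\<alpha> < \<beta>"
  shows "hmeasure \<beta> L = 0"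
proof -
  let ?r = "alph_size TYPE('v)"
  define R where "R = enn2real (hmeasure \<alpha> L) + 1"
  define c where "c = (\<lambda>N::nat. ?r powr (-(\<beta>-\<alpha>) * real N))"
  have r: "?r \<ge> 2" by (rule r_ge2)
  have Rpos: "R > 0" unfolding R_def by (simp add: enn2real_nonneg add_nonneg_pos)
  have key: "Mn \<beta> L N \<le> ennreal (c N * R)" for N
  proof -
    have "Mn \<alpha> L N \<le> hmeasure \<alpha> L" unfolding hm_SUP by (rule SUP_upper) auto
    also have "\<dots> < ennreal R" using fin unfolding R_def
      by (cases "hmeasure \<alpha> L") (auto simp: ennreal_less_iff)
    finally obtain V where V: "V \<in> covers L N" "cover_weight \<alpha> V < ennreal R"
      unfolding Mn_def by (auto simp: INF_less_iff)
    have "Mn \<beta> L N \<le> cover_weight \<beta> V" using V(1) unfolding Mn_def by (rule INF_lower)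
    also have "\<dots> \<le> ennreal (c N) * cover_weight \<alpha> V"
      unfolding c_def using V(1) ab by (intro cw_scale) (auto simp: covers_def)
    also have "\<dots> \<le> ennreal (c N) * ennreal R" using V(2) by (intro mult_left_mono) auto
    also have "\<dots> = ennreal (c N * R)" using Rpos by (intro ennreal_mult[symmetric]) (auto simp: c_def)
    finally show ?thesis .
  qed
  have cpow: "c N = (?r powr (-(\<beta>-\<alpha>))) ^ N" for N
  proof -
    have "c N = (?r powr (-(\<beta>-\<alpha>))) powr real N" unfolding c_def by (simp add: powr_powr)
    also have "\<dots> = (?r powr (-(\<beta>-\<alpha>))) ^ N" using r by (intro powr_realpow) auto
    finally show ?thesis .
  qed
  have lt1: "norm (?r powr (-(\<beta>-\<alpha>))) < 1" using r ab by (simp add: powr_less_one)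
  have lim: "(\<lambda>N. c N * R) \<longlonglongrightarrow> 0"
    unfolding cpow using LIMSEQ_power_zero[OF lt1] by (intro tendsto_mult_left_zero)
  have "Mn \<beta> L n \<le> 0" for n
  proof (rule ennreal_le_epsilon)
    fix e :: real assume "0 < e"
    from tendstoD[OF lim this] have "eventually (\<lambda>N. dist (c N * R) 0 < e) sequentially" .
    then obtain N0 where N0: "\<And>N. N \<ge> N0 \<Longrightarrow> dist (c N * R) 0 < e" by (auto simp: eventually_sequentially)
    define N where "N = max n N0"
    have "Mn \<beta> L n \<le> Mn \<beta> L N" unfolding N_def by (rule Mn_mono) auto
    also have "\<dots> \<le> ennreal (c N * R)" by (rule key)
    also have "\<dots> \<le> ennreal e" using N0[of N] unfolding N_def by (intro ennreal_leI) auto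
    finally show "Mn \<beta> L n \<le> 0 + ennreal e" by simp
  qed
  then show ?thesis unfolding hm_SUP by (simp add: SUP_least antisym)
qed

lemma sum_cover_le:
  fixes g :: "'a \<Rightarrow> ennreal" and K :: nat
  assumes "finite F" "F \<subseteq> (\<Union>k<K. B k)"
  shows "sum g F \<le> (\<Sum>k<K. sum g (F \<inter> B k))"
proof -
  have "sum g F \<le> (\<Sum>x\<in>F. \<Sum>k<K. (if x \<in> B k then g x else 0))"
  proof (rule sum_mono)
    fix x assume "x \<in> F"
    then obtain k where k: "k < K" "x \<in> B k" using assms(2) by auto
    have "g x = (if x \<in> B k then g x else 0)" using k by simp
    also have "\<dots> \<le> (\<Sum>k<K. (if x \<in> B k then g x else 0))"
      using k by (intro member_le_sum) auto
    finally show "g x \<le> (\<Sum>k<K. (if x \<in> B k then g x else 0))" .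
  qed
  also have "\<dots> = (\<Sum>k<K. \<Sum>x\<in>F. (if x \<in> B k then g x else 0))" by (rule sum.swap)
  also have "\<dots> = (\<Sum>k<K. sum g (F \<inter> B k))"
  proof -
    have eq: "(\<Sum>x\<in>F. (if x \<in> B k then g x else 0)) = sum g (F \<inter> B k)" for k
    proof -
      have "F \<inter> B k = {x\<in>F. x \<in> B k}" by auto
      then show ?thesis using assms(1) by (simp add: sum.inter_filter)
    qed
    show ?thesis by (simp only: eq)
  qed
  finally show ?thesis .
qed

lemma geom_sum: "(\<Sum>k<K. (e::real) / 2 ^ (Suc (Suc k))) = e / 2 - e / 2 ^ (Suc K)"
  by (induction K) (auto simp: field_simps)

lemma hm_union_null:
  fixes A :: "nat \<Rightarrow> ('v::finite) oword set"
  assumes "\<And>k. hmeasure \<beta> (A k) = 0"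
  shows "hmeasure \<beta> (\<Union>k. A k) = 0"
  unfolding null_iff
proof (intro allI impI)
  let ?r = "alph_size TYPE('v)"
  fix n and e :: real assume e: "e > 0"
  have "\<forall>k. \<exists>V. V \<in> covers (A k) n \<and> cover_weight \<beta> V < ennreal (e / 2 ^ (Suc (Suc k)))"
  proof
    fix k
    have "e / 2 ^ (Suc (Suc k)) > 0" using e by simp
    then show "\<exists>V. V \<in> covers (A k) n \<and> cover_weight \<beta> V < ennreal (e / 2 ^ (Suc (Suc k)))"
      using assms[of k] unfolding null_iff by blast
  qed
  then obtain Vs where Vs: "\<And>k. Vs k \<in> covers (A k) n"
    "\<And>k. cover_weight \<beta> (Vs k) < ennreal (e / 2 ^ (Suc (Suc k)))" by metis
  define V where "V = (\<Union>k. Vs k)"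
  have "V \<in> covers (\<Union>k. A k) n" using Vs(1) unfolding V_def covers_def by fastforce
  moreover have "cover_weight \<beta> V \<le> ennreal (e / 2)"
  proof (rule cw_le)
    fix F assume F: "finite F" "F \<subseteq> V"
    have "\<forall>x\<in>F. \<exists>k. x \<in> Vs k" using F unfolding V_def by auto
    then obtain f where f: "\<And>x. x \<in> F \<Longrightarrow> x \<in> Vs (f x)" by metis
    define K where "K = Suc (Max (f ` F))"
    have sub: "F \<subseteq> (\<Union>k<K. Vs k)"
    proof
      fix x assume "x \<in> F"
      then have "f x \<le> Max (f ` F)" using F(1) by auto
      then show "x \<in> (\<Union>k<K. Vs k)" using f[OF \<open>x \<in> F\<close>] unfolding K_def by auto
    qed
    have "(\<Sum>v\<in>F. ennreal (?r powr (- \<beta> * real (length v))))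
        \<le> (\<Sum>k<K. \<Sum>v\<in>F \<inter> Vs k. ennreal (?r powr (- \<beta> * real (length v))))"
      by (rule sum_cover_le[OF F(1) sub])
    also have "\<dots> \<le> (\<Sum>k<K. ennreal (e / 2 ^ (Suc (Suc k))))"
    proof (rule sum_mono)
      fix k
      have "(\<Sum>v\<in>F \<inter> Vs k. ennreal (?r powr (- \<beta> * real (length v)))) \<le> cover_weight \<beta> (Vs k)"
        using F(1) by (intro cw_ge) auto
      also have "\<dots> \<le> ennreal (e / 2 ^ (Suc (Suc k)))" using Vs(2)[of k] by simp
      finally show "(\<Sum>v\<in>F \<inter> Vs k. ennreal (?r powr (- \<beta> * real (length v)))) \<le> ennreal (e / 2 ^ (Suc (Suc k)))" .
    qed
    also have "\<dots> = ennreal (\<Sum>k<K. e / 2 ^ (Suc (Suc k)))"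
      using e by (intro sum_ennreal) auto
    also have "\<dots> \<le> ennreal (e / 2)" unfolding geom_sum using e by (intro ennreal_leI) auto
    finally show "(\<Sum>v\<in>F. ennreal (?r powr (- \<beta> * real (length v)))) \<le> ennreal (e / 2)" .
  qed
  note cwV = this
  have "ennreal (e / 2) < ennreal e" using e by (auto simp: ennreal_less_iff)
  with cwV have "cover_weight \<beta> V < ennreal e" by (rule le_less_trans)
  ultimately show "\<exists>V\<in>covers (\<Union>k. A k) n. cover_weight \<beta> V < ennreal e" by blast
qed

lemma hm_shift_null:
  fixes L :: "('v::finite) oword set"
  assumes "hmeasure \<beta> L = 0"
  shows "hmeasure \<beta> {w. suffix_w w k \<in> L} = 0"
  unfolding null_iff
proof (intro allI impI)
  let ?r = "alph_size TYPE('v)"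
  let ?g = "\<lambda>v::'v set list. ennreal (?r powr (- \<beta> * real (length v)))"
  fix n and e :: real assume e: "e > 0"
  have r: "?r \<ge> 2" by (rule r_ge2)
  define P where "P = {u :: 'v set list. set u \<subseteq> UNIV \<and> length u = k}"
  have finP: "finite P" unfolding P_def by (rule finite_lists_length_eq) simp
  define c' where "c' = ?r powr (- \<beta> * real k)"
  define D where "D = real (card P) * c'"
  have c'pos: "c' \<ge> 0" unfolding c'_def by simp
  have Dpos: "D \<ge> 0" unfolding D_def using c'pos by simp
  have "e / (D + 1) > 0" using e Dpos by simp
  then obtain V where V: "V \<in> covers L n" "cover_weight \<beta> V < ennreal (e / (D + 1))"
    using assms unfolding null_iff by blast
  define V' where "V' = (\<lambda>(u,v). u @ v) ` (P \<times> V)"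
  have Vcov: "V' \<in> covers {w. suffix_w w k \<in> L} n"
    unfolding covers_def
  proof (intro CollectI conjI ballI)
    fix x assume "x \<in> V'"
    then show "n \<le> length x" using V(1) unfolding V'_def covers_def by auto
  next
    fix w assume "w \<in> {w. suffix_w w k \<in> L}"
    then obtain v where v: "v \<in> V" "is_prefix v (suffix_w w k)"
      using V(1) unfolding covers_def by auto
    define u where "u = map w [0..<k]"
    have "u \<in> P" unfolding P_def u_def by simp
    have "is_prefix (u @ v) w"
      using v(2) unfolding is_prefix_def suffix_w_def u_def
      by (auto simp: nth_append)
    moreover have "u @ v \<in> V'" unfolding V'_def using \<open>u \<in> P\<close> v(1) by auto
    ultimately show "\<exists>v\<in>V'. is_prefix v w" by blast
  qed
  have cwV': "cover_weight \<beta> V' \<le> ennreal D * cover_weight \<beta> V"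
  proof (rule cw_le)
    fix F assume F: "finite F" "F \<subseteq> V'"
    define h where "h = (\<lambda>x::'v set list. (take k x, drop k x))"
    define G where "G = drop k ` F"
    have inj: "inj_on h F" unfolding h_def
      by (rule inj_onI) (metis append_take_drop_id prod.inject)
    have Fprop: "x \<in> F \<Longrightarrow> take k x \<in> P \<and> drop k x \<in> V" for x
      using F(2) unfolding V'_def P_def by auto
    have GV: "G \<subseteq> V" unfolding G_def using Fprop by auto
    have finG: "finite G" unfolding G_def using F(1) by simp
    have gsplit: "?g (u @ v) = ennreal c' * ?g v" if "u \<in> P" for u v
    proof -
      have "length u = k" using that unfolding P_def by simp
      then have "?r powr (- \<beta> * real (length (u @ v))) = c' * ?r powr (- \<beta> * real (length v))"
        unfolding c'_def by (simp add: powr_add[symmetric] algebra_simps)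
      then show ?thesis using c'pos by (simp add: ennreal_mult)
    qed
    have "sum (\<lambda>(u,v). ?g (u @ v)) (h ` F) = sum ((\<lambda>(u,v). ?g (u @ v)) \<circ> h) F"
      by (rule sum.reindex[OF inj])
    also have "\<dots> = sum ?g F" by (simp only: h_def comp_def prod.case append_take_drop_id)
    finally have "sum ?g F = sum (\<lambda>(u,v). ?g (u @ v)) (h ` F)" by simp
    also have "\<dots> \<le> sum (\<lambda>(u,v). ?g (u @ v)) (P \<times> G)"
      using finP finG Fprop unfolding G_def h_def by (intro sum_mono2) auto
    also have "\<dots> = (\<Sum>u\<in>P. \<Sum>v\<in>G. ?g (u @ v))"
      by (rule sum.cartesian_product[symmetric])
    also have "\<dots> = (\<Sum>u\<in>P. ennreal c' * sum ?g G)"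
    proof (rule sum.cong[OF refl])
      fix u assume "u \<in> P"
      have "(\<Sum>v\<in>G. ?g (u @ v)) = (\<Sum>v\<in>G. ennreal c' * ?g v)"
        by (rule sum.cong[OF refl]) (rule gsplit[OF \<open>u \<in> P\<close>])
      also have "\<dots> = ennreal c' * sum ?g G" by (rule sum_distrib_left[symmetric])
      finally show "(\<Sum>v\<in>G. ?g (u @ v)) = ennreal c' * sum ?g G" .
    qed
    also have "\<dots> = ennreal D * sum ?g G"
      unfolding D_def using c'pos by (simp add: ennreal_mult ennreal_of_nat_eq_real_of_nat mult.assoc)
    also have "\<dots> \<le> ennreal D * cover_weight \<beta> V"
      using finG GV by (intro mult_left_mono cw_ge) auto
    finally show "sum ?g F \<le> ennreal D * cover_weight \<beta> V" .
  qed
  have "ennreal D * cover_weight \<beta> V \<le> ennreal D * ennreal (e / (D + 1))"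
    using V(2) by (intro mult_left_mono) auto
  also have "\<dots> = ennreal (D * (e / (D + 1)))" using Dpos e by (intro ennreal_mult[symmetric]) auto
  also have "\<dots> < ennreal e"
  proof -
    have "D * (e / (D + 1)) < e" using Dpos e by (simp add: field_simps)
    then show ?thesis using e Dpos by (subst ennreal_less_iff) auto
  qed
  finally have "cover_weight \<beta> V' < ennreal e" using cwV' by (rule le_less_trans[rotated])
  then show "\<exists>V\<in>covers {w. suffix_w w k \<in> L} n. cover_weight \<beta> V < ennreal e" using Vcov by blast
qed

lemma suffix_suffix: "suffix_w (suffix_w w a) b = suffix_w w (b + a)"
  unfolding suffix_w_def by (simp add: add.assoc)

lemma suffix_0: "suffix_w w 0 = w"
  unfolding suffix_w_def by simp

lemma hdim_eq_general:
  fixes \<phi> \<psi> :: "('v::finite) ltl"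
  shows "hdim (lang (LAnd (LG \<phi>) (LF (LG (LNot \<psi>)))))
       = hdim (lang (LG (LAnd \<phi> (LNot \<psi>))))"
proof -
  define L1 where "L1 = lang (LAnd (LG \<phi>) (LF (LG (LNot \<psi>))))"
  define L2 where "L2 = lang (LG (LAnd \<phi> (LNot \<psi>)))"
  have sub21: "L2 \<subseteq> L1"
  proof
    fix w assume "w \<in> L2"
    then have "\<forall>j. sat (suffix_w w j) \<phi> \<and> \<not> sat (suffix_w w j) \<psi>" unfolding L2_def lang_def by simp
    then show "w \<in> L1" unfolding L1_def lang_def
      by (auto simp: suffix_suffix intro: exI[of _ 0])
  qed
  have sub1U: "L1 \<subseteq> (\<Union>k. {w. suffix_w w k \<in> L2})"
  proof
    fix w assume "w \<in> L1"
    then have a: "\<forall>j. sat (suffix_w w j) \<phi>" and "\<exists>k. \<forall>j. \<not> sat (suffix_w w (j + k)) \<psi>"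
      unfolding L1_def lang_def by (auto simp: suffix_suffix)
    then obtain k where b: "\<forall>j. \<not> sat (suffix_w w (j + k)) \<psi>" by blast
    have "suffix_w w k \<in> L2" unfolding L2_def lang_def using a b by (simp add: suffix_suffix)
    then show "w \<in> (\<Union>k. {w. suffix_w w k \<in> L2})" by blast
  qed
  have m21: "hmeasure \<alpha> L2 \<le> hmeasure \<alpha> L1" for \<alpha> by (rule hm_mono[OF sub21])
  have z21: "hmeasure \<alpha> L1 = 0" if "hmeasure \<alpha> L2 = 0" for \<alpha>
  proof -
    have "hmeasure \<alpha> L1 \<le> hmeasure \<alpha> (\<Union>k. {w. suffix_w w k \<in> L2})" by (rule hm_mono[OF sub1U])
    also have "\<dots> = 0" by (rule hm_union_null) (rule hm_shift_null[OF that])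
    finally show ?thesis by simp
  qed
  have eqv: "((\<forall>\<alpha><d. hmeasure \<alpha> L1 = \<infinity>) \<and> (\<forall>\<alpha>>d. hmeasure \<alpha> L1 = 0))
         = ((\<forall>\<alpha><d. hmeasure \<alpha> L2 = \<infinity>) \<and> (\<forall>\<alpha>>d. hmeasure \<alpha> L2 = 0))" for d
  proof
    assume h: "(\<forall>\<alpha><d. hmeasure \<alpha> L1 = \<infinity>) \<and> (\<forall>\<alpha>>d. hmeasure \<alpha> L1 = 0)"
    have A: "hmeasure \<alpha> L2 = \<infinity>" if "\<alpha> < d" for \<alpha>
    proof (rule ccontr)
      assume "hmeasure \<alpha> L2 \<noteq> \<infinity>"
      then have fin: "hmeasure \<alpha> L2 < \<infinity>" by (simp add: top.not_eq_extremum)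
      define \<beta> where "\<beta> = (\<alpha> + d) / 2"
      have "\<alpha> < \<beta>" "\<beta> < d" using that unfolding \<beta>_def by auto
      then have "hmeasure \<beta> L2 = 0" using fin by (intro hm_scale) auto
      then have "hmeasure \<beta> L1 = 0" by (rule z21)
      moreover have "hmeasure \<beta> L1 = \<infinity>" using h \<open>\<beta> < d\<close> by blast
      ultimately show False by simp
    qed
    have B: "hmeasure \<alpha> L2 = 0" if "\<alpha> > d" for \<alpha>
      using m21[of \<alpha>] h that by simp
    show "(\<forall>\<alpha><d. hmeasure \<alpha> L2 = \<infinity>) \<and> (\<forall>\<alpha>>d. hmeasure \<alpha> L2 = 0)" using A B by blast
  next
    assume h: "(\<forall>\<alpha><d. hmeasure \<alpha> L2 = \<infinity>) \<and> (\<forall>\<alpha>>d. hmeasure \<alpha> L2 = 0)"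
    have A: "hmeasure \<alpha> L1 = \<infinity>" if "\<alpha> < d" for \<alpha>
      using m21[of \<alpha>] h that by (simp add: top_unique)
    have B: "hmeasure \<alpha> L1 = 0" if "\<alpha> > d" for \<alpha>
      using h that z21 by blast
    show "(\<forall>\<alpha><d. hmeasure \<alpha> L1 = \<infinity>) \<and> (\<forall>\<alpha>>d. hmeasure \<alpha> L1 = 0)" using A B by blast
  qed
  show ?thesis unfolding L1_def[symmetric] L2_def[symmetric] hdim_def by (simp only: eqv)
qed

theorem theorem5:
  fixes Binv :: "('v::finite) xatom bexp" and Bfair :: "'v bexp"
  shows "hdim (lang (LAnd (LG (inv_ltl Binv)) (LF (LG (LNot (fair_ltl Bfair))))))
       = hdim (lang (LG (LAnd (inv_ltl Binv) (LNot (fair_ltl Bfair)))))"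
  by (rule hdim_eq_general)

end
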